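(* There exists a universal constant $\alpha>1/60$ such that for every $n\ge 1$ and every set $K\subseteq\mathbb{R}^n$ that is star-shaped with respect to the origin, \[ \gamma_n(\sqrt{n}\,K)\ge \alpha\,\sigma_{n-1}(K)\quad\text{and}\quad \gamma_n\big((\sqrt{n}\,K)^c\big)\ge \alpha\,\sigma_{n-1}(K^c). \]
   Context: $\gamma_n$ denotes the standard Gaussian probability measure on $\mathbb{R}^n$. $\sigma_{n-1}$ denotes the normalized rotation-invariant (Haar) probability measure on the sphere $S^{n-1}=\{x\in\mathbb{R}^n:|x|=1\}$, and for a set $A\subseteq\mathbb{R}^n$ we write $\sigma_{n-1}(A)$ for $\sigma_{n-1}(A\cap S^{n-1})$. $A^c$ denotes the complement $\mathbb{R}^n\setminus A$. A set $K$ is star-shaped with respect to the origin if $\lambda x\in K$ for all $x\in K$ and $\lambda\in[0,1]$. *)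

theory Defs
  imports "HOL-Analysis.Analysis"
begin

text \<open>Euclidean space R^n, modelled as extensional functions on {..<n},
  with Lebesgue (Borel product) measure.\<close>
definition leb_n :: "nat \<Rightarrow> (nat \<Rightarrow> real) measure" where
  "leb_n n = PiM {..<n} (\<lambda>_. lborel)"

definition vnorm_n :: "nat \<Rightarrow> (nat \<Rightarrow> real) \<Rightarrow> real" where
  "vnorm_n n x = sqrt (\<Sum>i<n. (x i)^2)"

definition vscale_n :: "nat \<Rightarrow> real \<Rightarrow> (nat \<Rightarrow> real) \<Rightarrow> (nat \<Rightarrow> real)" where
  "vscale_n n c x = (\<lambda>i\<in>{..<n}. c * x i)"

definition gauss_n :: "nat \<Rightarrow> (nat \<Rightarrow> real) measure" where
  "gauss_n n = density (leb_n n)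
     (\<lambda>x. ennreal ((2 * pi) powr (- real n / 2) * exp (- ((vnorm_n n x) ^ 2) / 2)))"

definition sphere_n :: "nat \<Rightarrow> (nat \<Rightarrow> real) set" where
  "sphere_n n = {x \<in> space (leb_n n). vnorm_n n x = 1}"

definition sphcone_n :: "nat \<Rightarrow> (nat \<Rightarrow> real) set \<Rightarrow> (nat \<Rightarrow> real) set" where
  "sphcone_n n A = {vscale_n n t x | t x. t \<in> {0..1} \<and> x \<in> A \<inter> sphere_n n}"

text \<open>Normalized surface (Haar) measure sigma_{n-1}(A) = sigma_{n-1}(A \<inter> S^{n-1}),
  via the cone-measure formula vol(cone over A) / vol(unit ball).\<close>
definition sigma_n :: "nat \<Rightarrow> (nat \<Rightarrow> real) set \<Rightarrow> real" where
  "sigma_n n A = measure (leb_n n) (sphcone_n n A) / measure (leb_n n) (sphcone_n n UNIV)"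

definition star_shaped_n :: "nat \<Rightarrow> (nat \<Rightarrow> real) set \<Rightarrow> bool" where
  "star_shaped_n n K = (\<forall>x\<in>K. \<forall>t\<in>{0..1}. vscale_n n t x \<in> K)"

end

theory Submission
  imports Defs "HOL-Probability.Distributions"
begin
lemma space_leb: "space (leb_n n) = PiE {..<n} (\<lambda>_. UNIV)"
  by (simp add: leb_n_def space_PiM)

lemma meas_vnorm[measurable]: "vnorm_n n \<in> borel_measurable (leb_n n)"
  unfolding vnorm_n_def[abs_def] leb_n_def by measurable

lemma meas_vscale[measurable]: "vscale_n n c \<in> leb_n n \<rightarrow>\<^sub>M leb_n n"
  unfolding vscale_n_def[abs_def] leb_n_def by measurable

lemma meas_dir[measurable]: "(\<lambda>x. vscale_n n (1 / vnorm_n n x) x) \<in> leb_n n \<rightarrow>\<^sub>M leb_n n"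
  unfolding vscale_n_def[abs_def] leb_n_def vnorm_n_def by measurable

lemma vnorm_scale: "vnorm_n n (vscale_n n c x) = \<bar>c\<bar> * vnorm_n n x"
proof -
  have "(\<Sum>i<n. (vscale_n n c x i)^2) = c^2 * (\<Sum>i<n. (x i)^2)"
    by (simp add: vscale_n_def sum_distrib_left power_mult_distrib)
  then show ?thesis by (simp add: vnorm_n_def real_sqrt_mult)
qed

lemma vscale_vscale: "vscale_n n a (vscale_n n b x) = vscale_n n (a*b) x"
  by (auto simp: vscale_n_def fun_eq_iff)

lemma vscale_1: "x \<in> space (leb_n n) \<Longrightarrow> vscale_n n 1 x = x"
  by (auto simp: vscale_n_def space_leb fun_eq_iff PiE_def extensional_def)

lemma vscale_space[simp]: "vscale_n n c x \<in> space (leb_n n)"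
  by (auto simp: vscale_n_def space_leb)

lemma vnorm_nonneg[simp]: "vnorm_n n x \<ge> 0"
  by (simp add: vnorm_n_def sum_nonneg)

interpretation lbprod: product_sigma_finite "\<lambda>_::nat. lborel::real measure"
  by unfold_locales

lemma lborel_preimage_mult:
  assumes "d > (0::real)" "A \<in> sets borel"
  shows "emeasure lborel ((*) d -` A) = ennreal (inverse d) * emeasure lborel A"
proof -
  have "emeasure lborel ((*) d -` A) = emeasure (distr lborel borel ((*) d)) A"
    using assms by (subst emeasure_distr) auto
  also have "\<dots> = emeasure (density lborel (\<lambda>_. inverse \<bar>d\<bar>)) A"
    using assms by (subst lborel_distr_mult) auto
  also have "\<dots> = ennreal (inverse d) * emeasure lborel A"
    using assms by (subst emeasure_density_const) (auto simp: ennreal_inverse_positive)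
  finally show ?thesis .
qed

lemma preimage_mult_sets: "B \<in> sets borel \<Longrightarrow> (*) (d::real) -` B \<in> sets borel"
  using measurable_sets[of "(*) d" borel borel B] by auto

lemma leb_distr_scale:
  assumes "d > (0::real)"
  shows "density (distr (leb_n n) (leb_n n) (vscale_n n d)) (\<lambda>_. ennreal (d^n)) = leb_n n"
  unfolding leb_n_def
proof (rule lbprod.PiM_eqI)
  fix A :: "nat \<Rightarrow> real set" assume A: "\<And>i. i \<in> {..<n} \<Longrightarrow> A i \<in> sets lborel"
  have pre: "vscale_n n d -` PiE {..<n} A \<inter> space (PiM {..<n} (\<lambda>_. lborel)) = PiE {..<n} (\<lambda>i. (*) d -` A i)"
    by (auto simp: vscale_n_def space_PiM PiE_def Pi_def extensional_def)
  have m: "vscale_n n d \<in> PiM {..<n} (\<lambda>_. lborel) \<rightarrow>\<^sub>M PiM {..<n} (\<lambda>_. lborel)"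
    using meas_vscale[of n d] by (simp add: leb_n_def)
  have Am: "PiE {..<n} A \<in> sets (PiM {..<n} (\<lambda>_. lborel))"
    using A by (auto intro!: sets_PiM_I_finite)
  have "emeasure (density (distr (PiM {..<n} (\<lambda>_. lborel)) (PiM {..<n} (\<lambda>_. lborel)) (vscale_n n d)) (\<lambda>_. ennreal (d^n))) (PiE {..<n} A)
     = ennreal (d^n) * emeasure (PiM {..<n} (\<lambda>_. lborel)) (PiE {..<n} (\<lambda>i. (*) d -` A i))"
    using Am m by (simp add: emeasure_density_const emeasure_distr pre)
  also have "\<dots> = ennreal (d^n) * (\<Prod>i<n. ennreal (inverse d) * emeasure lborel (A i))"
    using A assms by (subst lbprod.emeasure_PiM) (auto simp: lborel_preimage_mult preimage_mult_sets)
  also have "\<dots> = (\<Prod>i<n. emeasure lborel (A i))"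
    using assms by (simp add: prod.distrib ennreal_power[symmetric] mult.assoc[symmetric] ennreal_mult[symmetric] power_mult_distrib[symmetric])
  finally show "emeasure (density (distr (PiM {..<n} (\<lambda>_. lborel)) (PiM {..<n} (\<lambda>_. lborel)) (vscale_n n d)) (\<lambda>_. ennreal (d^n))) (PiE {..<n} A) = (\<Prod>i<n. emeasure lborel (A i))" .
qed simp_all


lemma image_scale_eq:
  assumes "c \<noteq> 0" "E \<subseteq> space (leb_n n)"
  shows "vscale_n n c ` E = vscale_n n (1/c) -` E \<inter> space (leb_n n)"
proof (intro equalityI subsetI)
  fix y assume "y \<in> vscale_n n c ` E"
  then obtain x where x: "x \<in> E" "y = vscale_n n c x" by auto
  then have "vscale_n n (1/c) y = x" using assms by (simp add: vscale_vscale vscale_1 subsetD)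
  then show "y \<in> vscale_n n (1/c) -` E \<inter> space (leb_n n)" using x by simp
next
  fix y assume y: "y \<in> vscale_n n (1/c) -` E \<inter> space (leb_n n)"
  then have "y = vscale_n n c (vscale_n n (1/c) y)" using assms by (simp add: vscale_vscale vscale_1)
  then show "y \<in> vscale_n n c ` E" using y by blast
qed

lemma image_scale_sets:
  assumes "c \<noteq> 0" "E \<in> sets (leb_n n)"
  shows "vscale_n n c ` E \<in> sets (leb_n n)"
  using assms by (simp add: image_scale_eq sets.sets_into_space)

lemma leb_scale:
  assumes "c > 0" "E \<in> sets (leb_n n)"
  shows "emeasure (leb_n n) (vscale_n n c ` E) = ennreal (c^n) * emeasure (leb_n n) E"
proof -
  have c: "1/c > 0" using assms by simp
  have "emeasure (leb_n n) E = ennreal ((1/c)^n) * emeasure (leb_n n) (vscale_n n (1/c) -` E \<inter> space (leb_n n))"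
    using assms by (subst leb_distr_scale[OF c, of n, symmetric]) (simp add: emeasure_density_const emeasure_distr)
  also have "vscale_n n (1/c) -` E \<inter> space (leb_n n) = vscale_n n c ` E"
    using assms by (simp add: image_scale_eq sets.sets_into_space)
  finally have "ennreal (c^n) * emeasure (leb_n n) E = ennreal (c^n) * ennreal ((1/c)^n) * emeasure (leb_n n) (vscale_n n c ` E)"
    by (simp add: mult.assoc)
  also have "ennreal (c^n) * ennreal ((1/c)^n) = 1"
    using assms by (simp add: ennreal_mult[symmetric] power_mult_distrib[symmetric])
  finally show ?thesis by simp
qed

definition cone_n :: "nat \<Rightarrow> (nat \<Rightarrow> real) set \<Rightarrow> (nat \<Rightarrow> real) set" where
  "cone_n n D = {x \<in> space (leb_n n). vnorm_n n x \<noteq> 0 \<and> vscale_n n (1 / vnorm_n n x) x \<in> D}"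

definition ball_n :: "nat \<Rightarrow> real \<Rightarrow> (nat \<Rightarrow> real) set" where
  "ball_n n r = {x \<in> space (leb_n n). vnorm_n n x \<le> r}"

lemma cone_sets[measurable]: "D \<in> sets (leb_n n) \<Longrightarrow> cone_n n D \<in> sets (leb_n n)"
proof -
  assume D: "D \<in> sets (leb_n n)"
  have "cone_n n D = {x \<in> space (leb_n n). vnorm_n n x \<noteq> 0} \<inter> ((\<lambda>x. vscale_n n (1 / vnorm_n n x) x) -` D \<inter> space (leb_n n))"
    by (auto simp: cone_n_def)
  also have "\<dots> \<in> sets (leb_n n)"
    using D by (intro sets.Int measurable_sets[OF meas_dir]) (auto)
  finally show ?thesis .
qed

lemma ball_sets[measurable]: "ball_n n r \<in> sets (leb_n n)"
  unfolding ball_n_def by measurable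

lemma cone_ball_scale:
  assumes "r > 0"
  shows "cone_n n D \<inter> ball_n n r = vscale_n n r ` (cone_n n D \<inter> ball_n n 1)"
proof (intro equalityI subsetI)
  fix y assume y: "y \<in> cone_n n D \<inter> ball_n n r"
  define x where "x = vscale_n n (1/r) y"
  have y1: "y \<in> space (leb_n n)" "vnorm_n n y \<noteq> 0" "vscale_n n (1 / vnorm_n n y) y \<in> D" "vnorm_n n y \<le> r"
    using y by (auto simp: cone_n_def ball_n_def)
  have nx: "vnorm_n n x = vnorm_n n y / r" using assms by (simp add: x_def vnorm_scale)
  have "vscale_n n (1 / vnorm_n n x) x = vscale_n n (1 / vnorm_n n y) y"
    using assms y1 unfolding x_def by (simp add: vscale_vscale vnorm_scale)
  then have "x \<in> cone_n n D \<inter> ball_n n 1"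
    using y1 assms nx by (auto simp: cone_n_def ball_n_def x_def)
  moreover have "y = vscale_n n r x" using assms y1 by (simp add: x_def vscale_vscale vscale_1)
  ultimately show "y \<in> vscale_n n r ` (cone_n n D \<inter> ball_n n 1)" by blast
next
  fix y assume "y \<in> vscale_n n r ` (cone_n n D \<inter> ball_n n 1)"
  then obtain x where x: "x \<in> cone_n n D \<inter> ball_n n 1" "y = vscale_n n r x" by auto
  have x1: "x \<in> space (leb_n n)" "vnorm_n n x \<noteq> 0" "vscale_n n (1 / vnorm_n n x) x \<in> D" "vnorm_n n x \<le> 1"
    using x by (auto simp: cone_n_def ball_n_def)
  have ny: "vnorm_n n y = r * vnorm_n n x" using assms x by (simp add: vnorm_scale)
  have "vscale_n n (1 / vnorm_n n y) y = vscale_n n (1 / vnorm_n n x) x"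
    using assms x1 unfolding x(2) by (simp add: vscale_vscale vnorm_scale)
  then show "y \<in> cone_n n D \<inter> ball_n n r"
    using x1 assms ny x by (auto simp: cone_n_def ball_n_def mult_left_le)
qed

lemma abs_le_vnorm: "i < n \<Longrightarrow> \<bar>x i\<bar> \<le> vnorm_n n x"
proof -
  assume i: "i < n"
  have "(x i)^2 \<le> (\<Sum>j<n. (x j)^2)"
    using i by (intro member_le_sum) auto
  then have "sqrt ((x i)^2) \<le> vnorm_n n x" unfolding vnorm_n_def by (rule real_sqrt_le_mono)
  then show ?thesis by simp
qed

lemma ball1_finite: "emeasure (leb_n n) (ball_n n 1) < \<infinity>"
proof -
  have "ball_n n 1 \<subseteq> PiE {..<n} (\<lambda>_. {-1..1})"
  proof -
    have "x \<in> PiE {..<n} (\<lambda>_. {-1..1})" if x: "x \<in> ball_n n 1" for x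
    proof -
      have x1: "x \<in> extensional {..<n}" "vnorm_n n x \<le> 1" using x by (auto simp: ball_n_def space_leb PiE_iff)
      have "\<forall>i\<in>{..<n}. x i \<in> {-1..1}"
      proof
        fix i assume "i \<in> {..<n}"
        then have "\<bar>x i\<bar> \<le> 1" using abs_le_vnorm[of i n x] x1(2) by simp
        then show "x i \<in> {-1..1}" by (simp add: abs_le_iff)
      qed
      then show ?thesis using x1(1) by (simp add: PiE_iff)
    qed
    then show ?thesis by blast
  qed
  moreover have "PiE {..<n} (\<lambda>_. {-1..1::real}) \<in> sets (leb_n n)"
    unfolding leb_n_def by (rule sets_PiM_I_finite) auto
  ultimately have "emeasure (leb_n n) (ball_n n 1) \<le> emeasure (leb_n n) (PiE {..<n} (\<lambda>_. {-1..1}))"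
    by (rule emeasure_mono)
  also have "\<dots> = (\<Prod>i<n. emeasure lborel {-1..(1::real)})"
    unfolding leb_n_def by (rule lbprod.emeasure_PiM) auto
  also have "\<dots> = (\<Prod>i<n. ennreal 2)" by simp
  also have "\<dots> < \<infinity>" by (simp add: power_less_top_ennreal)
  finally show ?thesis .
qed

lemma cone_ball_finite: "emeasure (leb_n n) (cone_n n D \<inter> ball_n n 1) < \<infinity>"
  using ball1_finite[of n] emeasure_mono[of "cone_n n D \<inter> ball_n n 1" "ball_n n 1" "leb_n n"]
  by (auto intro: le_less_trans)

lemma cone_ball_nonpos: "r \<le> 0 \<Longrightarrow> cone_n n D \<inter> ball_n n r = {}"
proof -
  assume r: "r \<le> 0"
  { fix x assume "x \<in> cone_n n D \<inter> ball_n n r"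
    then have "vnorm_n n x \<noteq> 0" "vnorm_n n x \<le> r" by (auto simp: cone_n_def ball_n_def)
    then have False using vnorm_nonneg[of n x] r by linarith }
  then show ?thesis by blast
qed

lemma cone_ball_measure:
  assumes "n \<ge> 1" "D \<in> sets (leb_n n)" "r \<ge> 0"
  shows "emeasure (leb_n n) (cone_n n D \<inter> ball_n n r) = ennreal (r^n * measure (leb_n n) (cone_n n D \<inter> ball_n n 1))"
proof (cases "r = 0")
  case True then show ?thesis using assms by (simp add: cone_ball_nonpos)
next
  case False
  then have r: "r > 0" using assms by simp
  have "emeasure (leb_n n) (cone_n n D \<inter> ball_n n r) = ennreal (r^n) * emeasure (leb_n n) (cone_n n D \<inter> ball_n n 1)"
    using r assms by (subst cone_ball_scale[OF r]) (simp add: leb_scale cone_sets ball_sets sets.Int)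
  also have "emeasure (leb_n n) (cone_n n D \<inter> ball_n n 1) = ennreal (measure (leb_n n) (cone_n n D \<inter> ball_n n 1))"
    using cone_ball_finite[of n D] by (simp add: emeasure_eq_ennreal_measure less_top)
  finally show ?thesis using r by (simp add: ennreal_mult)
qed

definition wD :: "nat \<Rightarrow> (nat \<Rightarrow> real) set \<Rightarrow> real" where
  "wD n D = measure (leb_n n) (cone_n n D \<inter> ball_n n 1)"

lemma wD_nonneg: "wD n D \<ge> 0" by (simp add: wD_def)

lemma cone_Ioc_eq:
  "cone_n n D \<inter> (vnorm_n n -` {a<..b} \<inter> space (leb_n n)) = (cone_n n D \<inter> ball_n n (max b 0)) - (cone_n n D \<inter> ball_n n (max a 0))"
proof -
  { fix x assume "x \<in> cone_n n D"
    then have "vnorm_n n x \<noteq> 0" by (simp add: cone_n_def)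
    then have "vnorm_n n x > 0" using vnorm_nonneg[of n x] by linarith
    then have "(a < vnorm_n n x \<and> vnorm_n n x \<le> b) \<longleftrightarrow> (vnorm_n n x \<le> max b 0 \<and> \<not> vnorm_n n x \<le> max a 0)"
      by (auto simp: max_def) }
  then show ?thesis by (auto simp: ball_n_def cone_n_def)
qed

lemma lhs_Ioc:
  assumes n: "n \<ge> 1" and D: "D \<in> sets (leb_n n)" and ab: "a \<le> b"
  shows "emeasure (distr (density (leb_n n) (indicator (cone_n n D))) borel (vnorm_n n)) {a<..b}
    = ennreal (wD n D * ((max b 0)^n - (max a 0)^n))"
proof -
  have m: "vnorm_n n \<in> density (leb_n n) (indicator (cone_n n D)) \<rightarrow>\<^sub>M borel" by simp
  have "emeasure (distr (density (leb_n n) (indicator (cone_n n D))) borel (vnorm_n n)) {a<..b}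
     = emeasure (leb_n n) (cone_n n D \<inter> (vnorm_n n -` {a<..b} \<inter> space (leb_n n)))"
    using D by (simp add: emeasure_distr emeasure_restricted)
  also have "\<dots> = emeasure (leb_n n) (cone_n n D \<inter> ball_n n (max b 0)) - emeasure (leb_n n) (cone_n n D \<inter> ball_n n (max a 0))"
    unfolding cone_Ioc_eq
  proof (rule emeasure_Diff)
    show "emeasure (leb_n n) (cone_n n D \<inter> ball_n n (max a 0)) \<noteq> \<infinity>"
      using cone_ball_measure[OF n D, of "max a 0"] by simp
  qed (use D ab in \<open>auto simp: ball_n_def\<close>)
  also have "\<dots> = ennreal ((max b 0)^n * wD n D) - ennreal ((max a 0)^n * wD n D)"
    using cone_ball_measure[OF n D] by (simp add: wD_def)
  also have "\<dots> = ennreal (wD n D * ((max b 0)^n - (max a 0)^n))"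
    using ab wD_nonneg[of n D] by (subst ennreal_minus) (auto simp: algebra_simps)
  finally show ?thesis .
qed

lemma rhs_Ioc:
  assumes n: "n \<ge> 1" and w: "w \<ge> 0" and ab: "a \<le> b"
  shows "emeasure (density lborel (\<lambda>r. ennreal (w * real n * r^(n-1)) * indicator {0<..} r)) {a<..b}
    = ennreal (w * ((max b 0)^n - (max a 0)^n))"
proof -
  let ?a = "max a 0" and ?b = "max b 0"
  have "emeasure (density lborel (\<lambda>r. ennreal (w * real n * r^(n-1)) * indicator {0<..} r)) {a<..b}
    = (\<integral>\<^sup>+r. ennreal (w * real n * r^(n-1)) * indicator {0<..} r * indicator {a<..b} r \<partial>lborel)"
    by (simp add: emeasure_density)
  also have "\<dots> = (\<integral>\<^sup>+r. ennreal (w * real n * r^(n-1)) * indicator {?a..?b} r \<partial>lborel)"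
  proof (rule nn_integral_cong_AE)
    show "AE r in lborel. ennreal (w * real n * r^(n-1)) * indicator {0<..} r * indicator {a<..b} r
        = ennreal (w * real n * r^(n-1)) * indicator {?a..?b} r"
      using AE_lborel_singleton[of ?a]
    proof (rule AE_mp, intro AE_I2 impI)
      fix r :: real assume "r \<noteq> ?a"
      then have "(r \<in> {0<..} \<and> r \<in> {a<..b}) \<longleftrightarrow> r \<in> {?a..?b}" by (auto simp: max_def)
      then show "ennreal (w * real n * r^(n-1)) * indicator {0<..} r * indicator {a<..b} r
        = ennreal (w * real n * r^(n-1)) * indicator {?a..?b} r"
        by (auto split: split_indicator)
    qed
  qed
  also have "\<dots> = ennreal (w * ?b^n - w * ?a^n)"
  proof (rule nn_integral_FTC_Icc)
    fix x assume "x \<in> {?a..?b}"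
    then have "x \<ge> 0" by auto
    then show "0 \<le> w * real n * x^(n-1)" using w by simp
    show "((\<lambda>r. w * r^n) has_real_derivative w * real n * x^(n-1)) (at x)"
      by (auto intro!: derivative_eq_intros)
  qed (use ab in auto)
  finally show ?thesis by (simp add: algebra_simps)
qed

lemma radial_distr:
  assumes n: "n \<ge> 1" and D: "D \<in> sets (leb_n n)"
  shows "distr (density (leb_n n) (indicator (cone_n n D))) borel (vnorm_n n)
    = density lborel (\<lambda>r. ennreal (wD n D * real n * r^(n-1)) * indicator {0<..} r)"
proof (rule measure_eqI_generator_eq_countable[where E="range (\<lambda>(a,b). {a<..b::real})" and \<Omega>=UNIV
      and A="range (\<lambda>k::nat. {- real k<..real k})"])
  show "Int_stable (range (\<lambda>(a,b). {a<..b::real}))"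
  proof (rule Int_stableI)
    fix X Y assume "X \<in> range (\<lambda>(a,b). {a<..b::real})" "Y \<in> range (\<lambda>(a,b). {a<..b::real})"
    then obtain a b c d where "X = {a<..b}" "Y = {c<..d}" by auto
    then have "X \<inter> Y = {max a c<..min b d}" by auto
    then show "X \<inter> Y \<in> range (\<lambda>(a,b). {a<..b::real})" by (auto intro!: image_eqI[where x="(max a c, min b d)"])
  qed
  have eq: "emeasure (distr (density (leb_n n) (indicator (cone_n n D))) borel (vnorm_n n)) X
      = emeasure (density lborel (\<lambda>r. ennreal (wD n D * real n * r^(n-1)) * indicator {0<..} r)) X
      \<and> emeasure (distr (density (leb_n n) (indicator (cone_n n D))) borel (vnorm_n n)) X \<noteq> \<infinity>"
    if "X \<in> range (\<lambda>(a,b). {a<..b::real})" for X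
  proof -
    from that obtain p where p: "X = (\<lambda>(a,b). {a<..b::real}) p" by (rule rangeE)
    obtain a b where "p = (a, b)" by (cases p)
    with p have X: "X = {a<..b}" by simp
    show ?thesis
    proof (cases "a \<le> b")
      case True
      then show ?thesis using lhs_Ioc[OF n D True] rhs_Ioc[OF n wD_nonneg True] X by simp
    next
      case False
      then have "X = {}" using X by auto
      then show ?thesis by simp
    qed
  qed
  show "\<And>X. X \<in> range (\<lambda>(a,b). {a<..b::real}) \<Longrightarrow> emeasure (distr (density (leb_n n) (indicator (cone_n n D))) borel (vnorm_n n)) X
      = emeasure (density lborel (\<lambda>r. ennreal (wD n D * real n * r^(n-1)) * indicator {0<..} r)) X"
    using eq by blast
  show "\<And>X. X \<in> range (\<lambda>k::nat. {- real k<..real k}) \<Longrightarrow> emeasure (distr (density (leb_n n) (indicator (cone_n n D))) borel (vnorm_n n)) X \<noteq> \<infinity>"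
    using eq by blast
  have sb: "sets (borel::real measure) = sigma_sets UNIV (range (\<lambda>(a,b). {a<..b::real}))"
    by (subst borel_sigma_sets_Ioc) simp
  show "sets (distr (density (leb_n n) (indicator (cone_n n D))) borel (vnorm_n n)) = sigma_sets UNIV (range (\<lambda>(a,b). {a<..b::real}))"
    using sb by simp
  show "sets (density lborel (\<lambda>r. ennreal (wD n D * real n * r^(n-1)) * indicator {0<..} r)) = sigma_sets UNIV (range (\<lambda>(a,b). {a<..b::real}))"
    using sb by simp
  show "range (\<lambda>k::nat. {- real k<..real k}) \<subseteq> range (\<lambda>(a,b). {a<..b::real})"
    by (auto intro!: image_eqI[where x="(- real k, real k)" for k])
  show "\<Union> (range (\<lambda>k::nat. {- real k<..real k})) = UNIV"
  proof (intro equalityI subsetI)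
    fix x :: real
    obtain k :: nat where "\<bar>x\<bar> < real k" using reals_Archimedean2 by blast
    then have "x \<in> {- real k<..real k}" by auto
    then show "x \<in> \<Union> (range (\<lambda>k::nat. {- real k<..real k}))" by blast
  qed simp
qed auto

definition Vf :: "nat \<Rightarrow> real" where
  "Vf m = (if even m then sqrt pi / 2 * (fact m / (2 ^ m * fact (m div 2))) else fact (m div 2) / 2)"

lemma gm: "has_bochner_integral lborel (\<lambda>x::real. indicator {0..} x *\<^sub>R (exp (-x\<^sup>2) * x^m)) (Vf m)"
proof (cases "even m")
  case True
  then obtain k where k: "m = 2 * k" by (auto elim: evenE)
  show ?thesis using gaussian_moment_even_pos[of k] by (simp add: Vf_def k)
next
  case False
  then obtain k where k: "m = 2 * k + 1" by (auto elim: oddE)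
  show ?thesis using gaussian_moment_odd_pos[of k] by (simp add: Vf_def k)
qed

lemma Vf_pos: "Vf m > 0"
  by (simp add: Vf_def)

lemma Vf_rec: "Vf (m + 2) = (real m + 1) / 2 * Vf m"
proof (cases "even m")
  case True
  then obtain k where k: "m = 2 * k" by (auto elim: evenE)
  have f1: "(fact (2*k+2) :: real) = (2*real k+2)*(2*real k+1)*fact(2*k)"
    by (simp add: algebra_simps numeral_2_eq_2)
  have f2: "(fact (k+1) :: real) = (real k+1) * fact k" by simp
  have p: "(2::real)^(2*k+2) = 4 * 2^(2*k)" by (simp add: power_add)
  have e: "m + 2 = 2*k+2" "(2*k+2) div 2 = k+1" "even (2*k+2)" using k by auto
  have "Vf (m+2) = sqrt pi / 2 * (fact (2*k+2) / (2^(2*k+2) * fact (k+1)))"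
    unfolding Vf_def e by simp
  also have "\<dots> = sqrt pi / 2 * (((2*real k+2)*(2*real k+1)*fact(2*k)) / (4 * 2^(2*k) * ((real k+1) * fact k)))"
    by (simp only: f1 f2 p)
  also have "\<dots> = (2 * real k + 1) / 2 * (sqrt pi / 2 * (fact (2*k) / (2^(2*k) * fact k)))"
  proof -
    have gen: "sqrt pi / 2 * (((2*j)*(2*j-1)*F) / (4 * P * (j * G))) = (2*j-1) / 2 * (sqrt pi / 2 * (F / (P * G)))"
      if "j \<noteq> 0" "P \<noteq> 0" "G \<noteq> 0" for j P G F :: real
      using that by (simp add: field_simps)
    have "2 * real k + 2 = 2 * (real k + 1)" "2 * real k + 1 = 2 * (real k + 1) - 1" by simp_all
    then show ?thesis using gen[of "real k + 1" "2^(2*k)" "fact k" "fact (2*k)"] by (simp add: add.commute)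
  qed
  also have "\<dots> = (real m + 1) / 2 * Vf m" using k by (simp add: Vf_def)
  finally show ?thesis .
next
  case False
  then obtain k where k: "m = 2 * k + 1" by (auto elim: oddE)
  have e: "(m + 2) div 2 = Suc k" "m div 2 = k" using k by auto
  show ?thesis using False
    by (simp add: Vf_def e k field_simps fact_Suc)
qed

definition MR :: "nat \<Rightarrow> real" where
  "MR m = sqrt 2 ^ (m + 1) * Vf m"

lemma MR_pos: "MR m > 0" by (simp add: MR_def Vf_pos)

lemma MR_rec: "MR (m + 2) = (real m + 1) * MR m"
proof -
  have "sqrt 2 ^ (m + 2 + 1) = 2 * sqrt (2::real) ^ (m+1)"
    by (simp add: power_add)
  then show ?thesis unfolding MR_def Vf_rec by simp
qed

lemma mr_int: "has_bochner_integral lborel (\<lambda>r::real. indicator {0..} r * (exp (-r\<^sup>2/2) * r^m)) (MR m)"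
proof -
  let ?fr = "\<lambda>r::real. indicator {0..} r * (exp (-r\<^sup>2/2) * r^m)"
  let ?fu = "\<lambda>x::real. indicator {0..} x *\<^sub>R (exp (-x\<^sup>2) * x^m)"
  have eq: "(\<lambda>u. ?fr (0 + sqrt 2 * u)) = (\<lambda>u. sqrt 2 ^ m * ?fu u)"
  proof
    fix u :: real
    have "indicator {0..} (sqrt 2 * u) = (indicator {0..} u :: real)"
      by (auto split: split_indicator simp: zero_le_mult_iff)
    moreover have "(sqrt 2 * u)\<^sup>2 / 2 = u\<^sup>2" by (simp add: power_mult_distrib)
    ultimately show "?fr (0 + sqrt 2 * u) = sqrt 2 ^ m * ?fu u"
      by (simp add: power_mult_distrib)
  qed
  have iu: "integrable lborel ?fu" using gm[of m] by (rule integrable.intros)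
  have "integrable lborel (\<lambda>u. ?fr (0 + sqrt 2 * u))" unfolding eq using iu by simp
  then have ir: "integrable lborel ?fr"
    using lborel_integrable_real_affine_iff[of "sqrt 2" ?fr 0] by simp
  have "integral\<^sup>L lborel ?fr = \<bar>sqrt 2\<bar> *\<^sub>R integral\<^sup>L lborel (\<lambda>u. ?fr (0 + sqrt 2 * u))"
    by (rule lborel_integral_real_affine) simp
  also have "\<dots> = sqrt 2 * (sqrt 2 ^ m * Vf m)"
    unfolding eq using has_bochner_integral_integral_eq[OF gm[of m]] by simp
  also have "\<dots> = MR m" by (simp add: MR_def)
  finally show ?thesis using ir by (simp add: has_bochner_integral_iff)
qed

lemma P1: "(z::real) \<le> 0 \<Longrightarrow> 60*z + 25*z^2 - z^4 \<le> 0"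
proof -
  assume z: "z \<le> 0"
  define w where "w = -z"
  have w: "w \<ge> 0" using z by (simp add: w_def)
  have "60 - 25*w + w^3 = (w-3)^2*(w+6) + 2*w + 6" by (simp add: algebra_simps power2_eq_square power3_eq_cube)
  also have "\<dots> \<ge> 0" using w by (intro add_nonneg_nonneg mult_nonneg_nonneg) auto
  finally have "w * (60 - 25*w + w^3) \<ge> 0" using w by simp
  moreover have "60*z + 25*z^2 - z^4 = - (w * (60 - 25*w + w^3))"
    by (simp add: w_def algebra_simps power2_eq_square power3_eq_cube power4_eq_xxxx)
  ultimately show ?thesis by linarith
qed

lemma P2: "60*(z::real) + 25*z^2 - z^4 \<le> 400"
proof -
  have "400 - (60*z + 25*z^2 - z^4) = (z^2-16)^2 + 7*(z - 30/7)^2 + 108/7"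
    by (simp add: algebra_simps power2_eq_square power4_eq_xxxx)
  also have "\<dots> \<ge> 0" by (intro add_nonneg_nonneg) auto
  finally show ?thesis by linarith
qed

lemma sandwich_pt:
  assumes "(0::real) \<le> Wv"
  shows "Wv * ((60*z + 25*z^2 - z^4)/400) \<le> Wv * (if z > 0 then 1 else 0)"
  using assms P1[of z] P2[of z] by (intro mult_left_mono) auto

declare add_2_eq_Suc [simp del] add_2_eq_Suc' [simp del]

context
  fixes m :: nat
begin

definition "nn = real m + 1"
definition "W (r::real) = indicator {0..} r * (exp (-r\<^sup>2/2) * r^m)"
definition "fm k (r::real) = indicator {0..} r * (exp (-r\<^sup>2/2) * r^(m+k))"

lemma fm_int: "has_bochner_integral lborel (fm k) (MR (m+k))"
  unfolding fm_def using mr_int[of "m+k"] by simp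

lemma nn_ge1: "nn \<ge> 1" by (simp add: nn_def)

lemma MR2: "MR (m+2) = nn * MR m" unfolding nn_def by (rule MR_rec)
lemma MR4: "MR (m+4) = (nn+2) * nn * MR m"
proof -
  have "m + 4 = (m+2) + 2" by simp
  then have "MR (m+4) = (real (m+2) + 1) * MR (m+2)" using MR_rec[of "m+2"] by (simp add: add.commute)
  then show ?thesis using MR2 by (simp add: nn_def algebra_simps)
qed
lemma MR6: "MR (m+6) = (nn+4) * (nn+2) * nn * MR m"
proof -
  have "m + 6 = (m+4) + 2" by simp
  then have "MR (m+6) = (real (m+4) + 1) * MR (m+4)" using MR_rec[of "m+4"] by (simp add: add.commute)
  then show ?thesis using MR4 by (simp add: nn_def algebra_simps)
qed
lemma MR8: "MR (m+8) = (nn+6) * (nn+4) * (nn+2) * nn * MR m"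
proof -
  have "m + 8 = (m+6) + 2" by simp
  then have "MR (m+8) = (real (m+6) + 1) * MR (m+6)" using MR_rec[of "m+6"] by (simp add: add.commute)
  then show ?thesis using MR6 by (simp add: nn_def algebra_simps)
qed

lemma fm_eq: "fm k r = W r * r^k" by (simp add: fm_def W_def power_add mult.assoc)

lemma g1: "has_bochner_integral lborel (\<lambda>r. W r * (r\<^sup>2 - nn)) 0"
proof -
  have "has_bochner_integral lborel (\<lambda>r. fm 2 r - nn * fm 0 r) (MR (m+2) - nn * MR (m+0))"
    by (intro has_bochner_integral_diff has_bochner_integral_mult_right fm_int)
  moreover have "(\<lambda>r. fm 2 r - nn * fm 0 r) = (\<lambda>r. W r * (r\<^sup>2 - nn))"
    by (simp add: fm_eq fun_eq_iff algebra_simps)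
  ultimately show ?thesis by (simp add: MR2)
qed

lemma g2: "has_bochner_integral lborel (\<lambda>r. W r * (r\<^sup>2 - nn)^2) (2 * nn * MR m)"
proof -
  have "has_bochner_integral lborel (\<lambda>r. fm 4 r - 2 * nn * fm 2 r + nn^2 * fm 0 r)
     (MR (m+4) - 2 * nn * MR (m+2) + nn^2 * MR (m+0))"
    by (intro has_bochner_integral_diff has_bochner_integral_add has_bochner_integral_mult_right fm_int)
  moreover have "(\<lambda>r. fm 4 r - 2 * nn * fm 2 r + nn^2 * fm 0 r) = (\<lambda>r. W r * (r\<^sup>2 - nn)^2)"
    by (simp add: fm_eq fun_eq_iff algebra_simps power2_eq_square power4_eq_xxxx)
  moreover have "MR (m+4) - 2 * nn * MR (m+2) + nn^2 * MR (m+0) = 2 * nn * MR m"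
    by (simp add: MR2 MR4 algebra_simps power2_eq_square)
  ultimately show ?thesis by simp
qed

lemma g4: "has_bochner_integral lborel (\<lambda>r. W r * (r\<^sup>2 - nn)^4) (12 * nn * (nn + 4) * MR m)"
proof -
  have "has_bochner_integral lborel (\<lambda>r. fm 8 r - 4 * nn * fm 6 r + 6 * nn^2 * fm 4 r - 4 * nn^3 * fm 2 r + nn^4 * fm 0 r)
     (MR (m+8) - 4 * nn * MR (m+6) + 6 * nn^2 * MR (m+4) - 4 * nn^3 * MR (m+2) + nn^4 * MR (m+0))"
    by (intro has_bochner_integral_diff has_bochner_integral_add has_bochner_integral_mult_right fm_int)
  moreover have "(\<lambda>r. fm 8 r - 4 * nn * fm 6 r + 6 * nn^2 * fm 4 r - 4 * nn^3 * fm 2 r + nn^4 * fm 0 r) = (\<lambda>r. W r * (r\<^sup>2 - nn)^4)"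
  proof
    fix r :: real
    have e1: "r^8 = (r^2)^4" by (subst power_mult[symmetric]) simp
    have e2: "r^6 = (r^2)^3" by (subst power_mult[symmetric]) simp
    have e3: "r^4 = (r^2)^2" by (subst power_mult[symmetric]) simp
    note e = e1 e2 e3
    show "fm 8 r - 4 * nn * fm 6 r + 6 * nn^2 * fm 4 r - 4 * nn^3 * fm 2 r + nn^4 * fm 0 r = W r * (r\<^sup>2 - nn)^4"
      unfolding fm_eq e by (simp add: algebra_simps power2_eq_square power3_eq_cube power4_eq_xxxx)
  qed
  moreover have "MR (m+8) - 4 * nn * MR (m+6) + 6 * nn^2 * MR (m+4) - 4 * nn^3 * MR (m+2) + nn^4 * MR (m+0) = 12 * nn * (nn + 4) * MR m"
    by (simp add: MR2 MR4 MR6 MR8 algebra_simps power2_eq_square power3_eq_cube power4_eq_xxxx)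
  ultimately show ?thesis by simp
qed

lemma gp:
  assumes e: "\<epsilon> = 1 \<or> \<epsilon> = -1"
  shows "has_bochner_integral lborel
     (\<lambda>r. W r * ((60 * (\<epsilon> * (r\<^sup>2 - nn) / sqrt (2*nn)) + 25 * (\<epsilon> * (r\<^sup>2 - nn) / sqrt (2*nn))^2 - (\<epsilon> * (r\<^sup>2 - nn) / sqrt (2*nn))^4) / 400))
     ((22 - 12 / nn) / 400 * MR m)"
proof -
  let ?s = "sqrt (2*nn)"
  have s2: "?s^2 = 2*nn" using nn_ge1 by simp
  have s4: "?s^4 = 4*nn^2" proof - have "?s^4 = (?s^2)^2" by (simp add: power_mult[symmetric]) then show ?thesis using s2 by (simp add: power2_eq_square) qed
  have e2: "\<epsilon>^2 = 1" "\<epsilon>^4 = 1" using e by auto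
  have sp: "?s > 0" using nn_ge1 by simp
  have H: "has_bochner_integral lborel
     (\<lambda>r. (60 * \<epsilon> / (400 * ?s)) * (W r * (r\<^sup>2 - nn)) + (25 / (400 * ?s^2)) * (W r * (r\<^sup>2 - nn)^2) - (1 / (400 * ?s^4)) * (W r * (r\<^sup>2 - nn)^4))
     ((60 * \<epsilon> / (400 * ?s)) * 0 + (25 / (400 * ?s^2)) * (2 * nn * MR m) - (1 / (400 * ?s^4)) * (12 * nn * (nn + 4) * MR m))"
    by (intro has_bochner_integral_diff has_bochner_integral_add has_bochner_integral_mult_right g1 g2 g4)
  have eqF: "(\<lambda>r. (60 * \<epsilon> / (400 * ?s)) * (W r * (r\<^sup>2 - nn)) + (25 / (400 * ?s^2)) * (W r * (r\<^sup>2 - nn)^2) - (1 / (400 * ?s^4)) * (W r * (r\<^sup>2 - nn)^4))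
     = (\<lambda>r. W r * ((60 * (\<epsilon> * (r\<^sup>2 - nn) / ?s) + 25 * (\<epsilon> * (r\<^sup>2 - nn) / ?s)^2 - (\<epsilon> * (r\<^sup>2 - nn) / ?s)^4) / 400))"
  proof
    fix r :: real
    define Y where "Y = r\<^sup>2 - nn"
    have z2: "(\<epsilon> * Y / ?s)^2 = Y^2 / ?s^2" by (simp add: power_divide power_mult_distrib e2)
    have z4: "(\<epsilon> * Y / ?s)^4 = Y^4 / ?s^4" by (simp add: power_divide power_mult_distrib e2)
    have "W r * ((60 * (\<epsilon> * Y / ?s) + 25 * (\<epsilon> * Y / ?s)^2 - (\<epsilon> * Y / ?s)^4) / 400)
      = (60 * \<epsilon> / (400 * ?s)) * (W r * Y) + (25 / (400 * ?s^2)) * (W r * Y^2) - (1 / (400 * ?s^4)) * (W r * Y^4)"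
      unfolding z2 z4 using sp by (simp add: field_simps)
    then show "(60 * \<epsilon> / (400 * ?s)) * (W r * (r\<^sup>2 - nn)) + (25 / (400 * ?s^2)) * (W r * (r\<^sup>2 - nn)^2) - (1 / (400 * ?s^4)) * (W r * (r\<^sup>2 - nn)^4)
     = W r * ((60 * (\<epsilon> * (r\<^sup>2 - nn) / ?s) + 25 * (\<epsilon> * (r\<^sup>2 - nn) / ?s)^2 - (\<epsilon> * (r\<^sup>2 - nn) / ?s)^4) / 400)"
      by (simp add: Y_def)
  qed
  have eqV: "(60 * \<epsilon> / (400 * ?s)) * 0 + (25 / (400 * ?s^2)) * (2 * nn * MR m) - (1 / (400 * ?s^4)) * (12 * nn * (nn + 4) * MR m)
      = (22 - 12 / nn) / 400 * MR m"
    using nn_ge1 unfolding s2 s4 by (simp add: field_simps power2_eq_square)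
  show ?thesis using H unfolding eqF eqV .
qed

lemma W_nonneg: "W r \<ge> 0"
  by (auto simp: W_def split: split_indicator)

lemma W_int: "integrable lborel W"
  using mr_int[of m] unfolding W_def[abs_def] by (rule integrable.intros)

lemma tail_up: "(\<integral>r. indicator {sqrt nn<..} r * W r \<partial>lborel) \<ge> MR m / 40"
proof -
  let ?s = "sqrt (2*nn)"
  let ?p = "\<lambda>r. W r * ((60 * (1 * (r\<^sup>2 - nn) / ?s) + 25 * (1 * (r\<^sup>2 - nn) / ?s)^2 - (1 * (r\<^sup>2 - nn) / ?s)^4) / 400)"
  have hp: "has_bochner_integral lborel ?p ((22 - 12 / nn) / 400 * MR m)" using gp[of 1] by simp
  have "MR m / 40 \<le> (22 - 12 / nn) / 400 * MR m"
    using nn_ge1 MR_pos[of m] by (simp add: field_simps)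
  also have "\<dots> = integral\<^sup>L lborel ?p" using has_bochner_integral_integral_eq[OF hp] by simp
  also have "\<dots> \<le> (\<integral>r. indicator {sqrt nn<..} r * W r \<partial>lborel)"
  proof (rule integral_mono)
    show "integrable lborel ?p" using hp by (rule integrable.intros)
    show "integrable lborel (\<lambda>r. indicator {sqrt nn<..} r * W r)" using integrable_mult_indicator[OF _ W_int, of "{sqrt nn<..}"] by simp
    fix r :: real
    have sp: "?s > 0" using nn_ge1 by simp
    show "?p r \<le> indicator {sqrt nn<..} r * W r"
    proof (cases "r \<ge> 0")
      case True
      have "sqrt nn < r \<longleftrightarrow> sqrt nn < sqrt (r\<^sup>2)" using True by simp
      also have "\<dots> \<longleftrightarrow> nn < r\<^sup>2" by (rule real_sqrt_less_iff)
      also have "\<dots> \<longleftrightarrow> (1 * (r\<^sup>2 - nn) / ?s > 0)" using sp by (simp add: zero_less_divide_iff)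
      finally have iff: "(1 * (r\<^sup>2 - nn) / ?s > 0) \<longleftrightarrow> r \<in> {sqrt nn<..}" by simp
      have "?p r \<le> W r * (if 1 * (r\<^sup>2 - nn) / ?s > 0 then 1 else 0)"
        by (rule sandwich_pt[OF W_nonneg])
      also have "\<dots> = indicator {sqrt nn<..} r * W r"
        unfolding iff by (simp add: indicator_def)
      finally show ?thesis .
    next
      case False
      then show ?thesis by (simp add: W_def)
    qed
  qed
  finally show ?thesis .
qed


lemma tail_lo: "(\<integral>r. indicator {..sqrt nn} r * W r \<partial>lborel) \<ge> MR m / 40"
proof -
  let ?s = "sqrt (2*nn)"
  let ?p = "\<lambda>r. W r * ((60 * (-1 * (r\<^sup>2 - nn) / ?s) + 25 * (-1 * (r\<^sup>2 - nn) / ?s)^2 - (-1 * (r\<^sup>2 - nn) / ?s)^4) / 400)"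
  have hp: "has_bochner_integral lborel ?p ((22 - 12 / nn) / 400 * MR m)" using gp[of "-1"] by simp
  have "MR m / 40 \<le> (22 - 12 / nn) / 400 * MR m"
    using nn_ge1 MR_pos[of m] by (simp add: field_simps)
  also have "\<dots> = integral\<^sup>L lborel ?p" using has_bochner_integral_integral_eq[OF hp] by simp
  also have "\<dots> \<le> (\<integral>r. indicator {..sqrt nn} r * W r \<partial>lborel)"
  proof (rule integral_mono)
    show "integrable lborel ?p" using hp by (rule integrable.intros)
    show "integrable lborel (\<lambda>r. indicator {..sqrt nn} r * W r)" using integrable_mult_indicator[OF _ W_int, of "{..sqrt nn}"] by simp
    fix r :: real
    have sp: "?s > 0" using nn_ge1 by simp
    show "?p r \<le> indicator {..sqrt nn} r * W r"
    proof (cases "r \<ge> 0")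
      case True
      have imp: "r \<in> {..sqrt nn}" if "(-1 * (r\<^sup>2 - nn) / ?s > 0)"
      proof -
        have "r\<^sup>2 < nn" using that sp by (simp add: zero_less_divide_iff)
        then have "sqrt (r\<^sup>2) < sqrt nn" by (rule real_sqrt_less_mono)
        then show ?thesis using True by simp
      qed
      have "?p r \<le> W r * (if -1 * (r\<^sup>2 - nn) / ?s > 0 then 1 else 0)"
        by (rule sandwich_pt[OF W_nonneg])
      also have "\<dots> \<le> indicator {..sqrt nn} r * W r"
        using imp W_nonneg[of r] by (simp add: indicator_def)
      finally show ?thesis .
    next
      case False
      then show ?thesis by (simp add: W_def)
    qed
  qed
  finally show ?thesis .
qed

end

definition Gd :: "nat \<Rightarrow> real \<Rightarrow> real" where
  "Gd n r = (2 * pi) powr (- real n / 2) * exp (- (r ^ 2) / 2)"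

definition Jr :: "nat \<Rightarrow> real set \<Rightarrow> ennreal" where
  "Jr n R = (\<integral>\<^sup>+r. ennreal (real n * r^(n-1) * Gd n r) * indicator {0<..} r * indicator R r \<partial>lborel)"

lemma Gd_nonneg: "Gd n r \<ge> 0" by (simp add: Gd_def)

lemma gauss_eq: "gauss_n n = density (leb_n n) (\<lambda>x. ennreal (Gd n (vnorm_n n x)))"
  by (simp add: gauss_n_def Gd_def)

lemma meas_Gd[measurable]: "Gd n \<in> borel_measurable borel"
  unfolding Gd_def[abs_def] by measurable

lemma gauss_cone:
  assumes n: "n \<ge> 1" and D: "D \<in> sets (leb_n n)" and R[measurable]: "R \<in> sets borel"
  shows "emeasure (gauss_n n) (cone_n n D \<inter> (vnorm_n n -` R \<inter> space (leb_n n))) = ennreal (wD n D) * Jr n R"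
proof -
  have Dm[measurable]: "cone_n n D \<in> sets (leb_n n)" using D by (rule cone_sets)
  have Xm: "cone_n n D \<inter> (vnorm_n n -` R \<inter> space (leb_n n)) \<in> sets (leb_n n)"
    by (intro sets.Int Dm measurable_sets[OF meas_vnorm R])
  let ?h = "\<lambda>r. ennreal (Gd n r) * indicator R r"
  have "emeasure (gauss_n n) (cone_n n D \<inter> (vnorm_n n -` R \<inter> space (leb_n n)))
      = (\<integral>\<^sup>+x. ennreal (Gd n (vnorm_n n x)) * indicator (cone_n n D \<inter> (vnorm_n n -` R \<inter> space (leb_n n))) x \<partial>leb_n n)"
    unfolding gauss_eq using Xm by (subst emeasure_density) auto
  also have "\<dots> = (\<integral>\<^sup>+x. indicator (cone_n n D) x * ?h (vnorm_n n x) \<partial>leb_n n)"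
    by (intro nn_integral_cong) (auto split: split_indicator)
  also have "\<dots> = (\<integral>\<^sup>+x. ?h (vnorm_n n x) \<partial>density (leb_n n) (indicator (cone_n n D)))"
    by (subst nn_integral_density) auto
  also have "\<dots> = (\<integral>\<^sup>+r. ?h r \<partial>distr (density (leb_n n) (indicator (cone_n n D))) borel (vnorm_n n))"
    by (subst nn_integral_distr) auto
  also have "\<dots> = (\<integral>\<^sup>+r. ennreal (wD n D * real n * r^(n-1)) * indicator {0<..} r * ?h r \<partial>lborel)"
    unfolding radial_distr[OF n D] by (subst nn_integral_density) auto
  also have "\<dots> = (\<integral>\<^sup>+r. ennreal (wD n D) * (ennreal (real n * r^(n-1) * Gd n r) * indicator {0<..} r * indicator R r) \<partial>lborel)"
  proof (intro nn_integral_cong)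
    fix r :: real
    show "ennreal (wD n D * real n * r^(n-1)) * indicator {0<..} r * ?h r
      = ennreal (wD n D) * (ennreal (real n * r^(n-1) * Gd n r) * indicator {0<..} r * indicator R r)"
    proof (cases "r > 0")
      case True
      then have "ennreal (wD n D * real n * r^(n-1)) * ennreal (Gd n r) = ennreal (wD n D) * ennreal (real n * r^(n-1) * Gd n r)"
        using wD_nonneg[of n D] Gd_nonneg[of n r] by (simp add: ennreal_mult[symmetric] mult.assoc)
      then show ?thesis using True by (simp add: mult.assoc mult.left_commute[of _ "indicator R r"] split: split_indicator)
    qed simp
  qed
  also have "\<dots> = ennreal (wD n D) * Jr n R"
    unfolding Jr_def by (subst nn_integral_cmult) auto
  finally show ?thesis .
qed

lemma pow_2pi: "(2 * pi) powr (- 1 / 2) = 1 / sqrt (2 * pi)"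
proof -
  have "(2 * pi) powr (- 1 / 2) = (2 * pi) powr (- (1 / 2))" by simp
  also have "\<dots> = inverse ((2 * pi) powr (1 / 2))"
    by (rule powr_minus)
  also have "(2 * pi) powr (1 / 2) = sqrt (2 * pi)" by (rule powr_half_sqrt) simp
  finally show ?thesis by (simp add: inverse_eq_divide)
qed

lemma exp_vnorm: "exp (- ((vnorm_n n x)^2) / 2) = (\<Prod>i<n. exp (- ((x i)^2) / 2))"
proof -
  have sq: "(vnorm_n n x)^2 = (\<Sum>i<n. (x i)^2)"
    unfolding vnorm_n_def by (simp add: sum_nonneg)
  have "- ((\<Sum>i<n. (x i)^2)) / 2 = (\<Sum>i<n. - ((x i)^2) / 2)"
    by (simp add: sum_negf sum_divide_distrib)
  then show ?thesis
    unfolding sq by (simp add: exp_sum)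
qed

lemma powr_2pi_n: "(2 * pi) powr (- real n / 2) = (\<Prod>i<n. 1 / sqrt (2 * pi))"
proof -
  have "(2 * pi) powr (- real n / 2) = ((2 * pi) powr (- 1 / 2)) powr (real n)"
    by (simp add: powr_powr)
  also have "\<dots> = ((2 * pi) powr (- 1 / 2)) ^ n"
    by (rule powr_realpow) simp
  finally show ?thesis unfolding pow_2pi by simp
qed

lemma Gd_prod: "Gd n (vnorm_n n x) = (\<Prod>i<n. std_normal_density (x i))"
proof -
  have "Gd n (vnorm_n n x) = (\<Prod>i<n. 1 / sqrt (2 * pi)) * (\<Prod>i<n. exp (- ((x i)^2) / 2))"
    unfolding Gd_def powr_2pi_n exp_vnorm ..
  also have "\<dots> = (\<Prod>i<n. 1 / sqrt (2 * pi) * exp (- ((x i)^2) / 2))"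
    by (rule prod.distrib[symmetric])
  also have "\<dots> = (\<Prod>i<n. std_normal_density (x i))"
    by (rule prod.cong) (simp_all add: std_normal_density_def)
  finally show ?thesis .
qed

lemma std_normal_nn: "(\<integral>\<^sup>+t. ennreal (std_normal_density t) \<partial>lborel) = 1"
  by (subst nn_integral_eq_integral) auto

lemma gauss_total: "emeasure (gauss_n n) (space (leb_n n)) = 1"
proof -
  have "emeasure (gauss_n n) (space (leb_n n)) = (\<integral>\<^sup>+x. ennreal (Gd n (vnorm_n n x)) * indicator (space (leb_n n)) x \<partial>leb_n n)"
    unfolding gauss_eq by (subst emeasure_density) auto
  also have "\<dots> = (\<integral>\<^sup>+x. (\<Prod>i<n. ennreal (std_normal_density (x i))) \<partial>leb_n n)"
    by (intro nn_integral_cong) (simp add: Gd_prod prod_ennreal)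
  also have "\<dots> = (\<Prod>i<n. (\<integral>\<^sup>+t. ennreal (std_normal_density t) \<partial>lborel))"
    unfolding leb_n_def by (rule lbprod.product_nn_integral_prod) auto
  also have "\<dots> = 1" by (simp add: std_normal_nn)
  finally show ?thesis .
qed

definition z0 :: "nat \<Rightarrow> nat \<Rightarrow> real" where "z0 n = (\<lambda>i\<in>{..<n}. 0)"

lemma z0_eq: "{z0 n} = PiE {..<n} (\<lambda>_. {0::real})"
  by (auto simp: z0_def PiE_def extensional_def fun_eq_iff)

lemma z0_null: "n \<ge> 1 \<Longrightarrow> {z0 n} \<in> null_sets (leb_n n)"
proof -
  assume n: "n \<ge> 1"
  have s: "{z0 n} \<in> sets (leb_n n)" unfolding z0_eq leb_n_def by (rule sets_PiM_I_finite) auto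
  have "emeasure (leb_n n) {z0 n} = (\<Prod>i<n. emeasure lborel {0::real})"
    unfolding z0_eq leb_n_def by (rule lbprod.emeasure_PiM) auto
  also have "\<dots> = 0" using n by simp
  finally show ?thesis using s by (simp add: null_sets_def)
qed

lemma vnorm_zero_iff:
  assumes "x \<in> space (leb_n n)"
  shows "vnorm_n n x = 0 \<longleftrightarrow> x = z0 n"
proof -
  have "vnorm_n n x = 0 \<longleftrightarrow> (\<Sum>i<n. (x i)^2) = 0" by (simp add: vnorm_n_def sum_nonneg)
  also have "\<dots> \<longleftrightarrow> (\<forall>i<n. x i = 0)" by (auto simp: sum_nonneg_eq_0_iff)
  also have "\<dots> \<longleftrightarrow> x = z0 n"
    using assms by (auto simp: z0_def space_leb PiE_def extensional_def fun_eq_iff)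
  finally show ?thesis .
qed

lemma cone_UNIV: "cone_n n UNIV = cone_n n (space (leb_n n))"
  by (auto simp: cone_n_def)

lemma cone_univ_eq: "cone_n n UNIV \<inter> (vnorm_n n -` UNIV \<inter> space (leb_n n)) = space (leb_n n) - {z0 n}"
  using vnorm_zero_iff[of _ n] by (auto simp: cone_n_def)

lemma gauss_cone_univ:
  assumes n: "n \<ge> 1"
  shows "ennreal (wD n UNIV) * Jr n UNIV = 1"
proof -
  have "ennreal (wD n UNIV) * Jr n UNIV = ennreal (wD n (space (leb_n n))) * Jr n UNIV"
    by (simp add: wD_def cone_UNIV)
  also have "\<dots> = emeasure (gauss_n n) (cone_n n (space (leb_n n)) \<inter> (vnorm_n n -` UNIV \<inter> space (leb_n n)))"
    by (rule gauss_cone[OF n, symmetric]) auto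
  also have "\<dots> = emeasure (gauss_n n) (space (leb_n n) - {z0 n})"
    using cone_univ_eq[of n] by (simp add: cone_UNIV Int_absorb2 Diff_subset)
  also have "\<dots> = emeasure (gauss_n n) (space (leb_n n))"
  proof (rule emeasure_Diff_null_set)
    have ae: "AE x in leb_n n. x \<notin> {z0 n}" by (rule AE_not_in[OF z0_null[OF n]])
    have "AE x in leb_n n. x \<in> {z0 n} \<longrightarrow> ennreal (Gd n (vnorm_n n x)) = 0"
      using ae by (rule eventually_mono) auto
    then show "{z0 n} \<in> null_sets (gauss_n n)"
      unfolding gauss_eq using z0_null[OF n]
      by (subst null_sets_density_iff) auto
  qed (simp add: gauss_eq)
  also have "\<dots> = 1" by (rule gauss_total)
  finally show ?thesis .
qed

lemma W_total: "(\<integral>r. W m r \<partial>lborel) = MR m"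
  using has_bochner_integral_integral_eq[OF mr_int[of m]] by (simp add: W_def[abs_def])

lemma Jr_W:
  assumes n: "n \<ge> 1" and R[measurable]: "R \<in> sets borel"
  shows "Jr n R = ennreal (real n * (2 * pi) powr (- real n / 2)) * ennreal (\<integral>r. indicator R r * W (n-1) r \<partial>lborel)"
proof -
  let ?c = "real n * (2 * pi) powr (- real n / 2)"
  have c: "?c \<ge> 0" by simp
  have "Jr n R = (\<integral>\<^sup>+r. ennreal ?c * ennreal (indicator R r * W (n-1) r) \<partial>lborel)"
    unfolding Jr_def
  proof (rule nn_integral_cong_AE)
    show "AE r in lborel. ennreal (real n * r^(n-1) * Gd n r) * indicator {0<..} r * indicator R r
        = ennreal ?c * ennreal (indicator R r * W (n-1) r)"
      using AE_lborel_singleton[of 0]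
    proof (rule eventually_mono)
      fix r :: real assume r0: "r \<noteq> 0"
      show "ennreal (real n * r^(n-1) * Gd n r) * indicator {0<..} r * indicator R r
        = ennreal ?c * ennreal (indicator R r * W (n-1) r)"
      proof (cases "r > 0")
        case True
        have eq: "real n * r^(n-1) * Gd n r = ?c * W (n-1) r"
          using True by (simp add: Gd_def W_def mult_ac)
        have "W (n-1) r \<ge> 0" by (rule W_nonneg)
        then show ?thesis using True c unfolding eq
          by (cases "r \<in> R") (simp_all add: ennreal_mult[symmetric])
      next
        case False
        then have "r < 0" using r0 by simp
        then show ?thesis by (simp add: W_def)
      qed
    qed
  qed
  also have "\<dots> = ennreal ?c * (\<integral>\<^sup>+r. ennreal (indicator R r * W (n-1) r) \<partial>lborel)"
    by (rule nn_integral_cmult) (simp add: W_def[abs_def])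
  also have "(\<integral>\<^sup>+r. ennreal (indicator R r * W (n-1) r) \<partial>lborel) = ennreal (\<integral>r. indicator R r * W (n-1) r \<partial>lborel)"
  proof (rule nn_integral_eq_integral)
    show "integrable lborel (\<lambda>r. indicator R r * W (n-1) r)"
      using integrable_mult_indicator[OF R[unfolded sets_lborel[symmetric]] W_int[of "n-1"]] by simp
    show "AE r in lborel. 0 \<le> indicator R r * W (n-1) r"
      using W_nonneg by simp
  qed
  finally show ?thesis .
qed

lemma nn_n: "n \<ge> 1 \<Longrightarrow> nn (n-1) = real n" by (simp add: nn_def)

lemma vscale_0: "vscale_n n 0 x = z0 n" by (simp add: vscale_n_def z0_def)

lemma sphcone_sub1: "cone_n n A \<inter> ball_n n 1 \<subseteq> sphcone_n n A"
proof
  fix y assume y: "y \<in> cone_n n A \<inter> ball_n n 1"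
  let ?v = "vnorm_n n y"
  have y1: "y \<in> space (leb_n n)" "?v \<noteq> 0" "vscale_n n (1/?v) y \<in> A" "?v \<le> 1"
    using y by (auto simp: cone_n_def ball_n_def)
  have v: "?v > 0" using y1(2) vnorm_nonneg[of n y] by linarith
  have "vnorm_n n (vscale_n n (1/?v) y) = 1" using v by (simp add: vnorm_scale)
  then have th: "vscale_n n (1/?v) y \<in> A \<inter> sphere_n n" using y1 by (simp add: sphere_n_def)
  have "vscale_n n ?v (vscale_n n (1/?v) y) = y" using v y1 by (simp add: vscale_vscale vscale_1)
  then show "y \<in> sphcone_n n A" unfolding sphcone_n_def using th v y1(4)
    by (intro CollectI exI[of _ ?v] exI[of _ "vscale_n n (1/?v) y"]) simp
qed

lemma sphcone_sub2: "sphcone_n n A \<subseteq> (cone_n n A \<inter> ball_n n 1) \<union> {z0 n}"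
proof
  fix y assume "y \<in> sphcone_n n A"
  then obtain t x where tx: "y = vscale_n n t x" "t \<in> {0..1}" "x \<in> A" "x \<in> space (leb_n n)" "vnorm_n n x = 1"
    unfolding sphcone_n_def sphere_n_def by blast
  show "y \<in> (cone_n n A \<inter> ball_n n 1) \<union> {z0 n}"
  proof (cases "t = 0")
    case True then show ?thesis using tx by (simp add: vscale_0)
  next
    case False
    then have t: "t > 0" "t \<le> 1" using tx by auto
    have ny: "vnorm_n n y = t" using tx t by (simp add: vnorm_scale)
    have "vscale_n n (1 / vnorm_n n y) y = vscale_n n (1/t) (vscale_n n t x)" using tx ny by simp
    also have "\<dots> = x" using tx t by (simp add: vscale_vscale vscale_1)
    finally have "vscale_n n (1 / vnorm_n n y) y = x" .
    then have "y \<in> cone_n n A \<inter> ball_n n 1"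
      using tx t ny by (simp add: cone_n_def ball_n_def)
    then show ?thesis by blast
  qed
qed

lemma sphcone_measure:
  assumes n: "n \<ge> 1" and C: "cone_n n A \<in> sets (leb_n n)"
  shows "measure (leb_n n) (sphcone_n n A) = wD n A"
proof -
  have Cm: "cone_n n A \<inter> ball_n n 1 \<in> sets (leb_n n)" using C by (intro sets.Int ball_sets)
  show ?thesis
  proof (cases "z0 n \<in> sphcone_n n A")
    case True
    then have "sphcone_n n A = (cone_n n A \<inter> ball_n n 1) \<union> {z0 n}"
      using sphcone_sub1[of n A] sphcone_sub2[of n A] by blast
    then show ?thesis using measure_Un_null_set[OF Cm z0_null[OF n]] by (simp add: wD_def)
  next
    case False
    then have "sphcone_n n A = cone_n n A \<inter> ball_n n 1"
      using sphcone_sub1[of n A] sphcone_sub2[of n A] by blast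
    then show ?thesis by (simp add: wD_def)
  qed
qed

lemma incl_up:
  assumes n: "n \<ge> 1" and st: "star_shaped_n n K" and Ks: "K \<subseteq> space (leb_n n)"
  shows "cone_n n K \<inter> (vnorm_n n -` {..sqrt (real n)} \<inter> space (leb_n n)) \<subseteq> vscale_n n (sqrt (real n)) ` K"
proof
  fix y assume y: "y \<in> cone_n n K \<inter> (vnorm_n n -` {..sqrt (real n)} \<inter> space (leb_n n))"
  let ?v = "vnorm_n n y" and ?s = "sqrt (real n)"
  have y1: "y \<in> space (leb_n n)" "?v \<noteq> 0" "vscale_n n (1/?v) y \<in> K" "?v \<le> ?s"
    using y by (auto simp: cone_n_def)
  have v: "?v > 0" using y1(2) vnorm_nonneg[of n y] by linarith
  have s: "?s > 0" using n by simp
  have t: "?v / ?s \<in> {0..1}" using v s y1(4) by auto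
  have xK: "vscale_n n (?v / ?s) (vscale_n n (1/?v) y) \<in> K"
    using st y1(3) t unfolding star_shaped_n_def by blast
  have "vscale_n n ?s (vscale_n n (?v / ?s) (vscale_n n (1/?v) y)) = vscale_n n (?s * (?v / ?s * (1/?v))) y"
    by (simp add: vscale_vscale)
  also have "?s * (?v / ?s * (1/?v)) = 1" using v s by simp
  finally have "vscale_n n ?s (vscale_n n (?v / ?s) (vscale_n n (1/?v) y)) = y"
    using y1(1) by (simp add: vscale_1)
  then show "y \<in> vscale_n n ?s ` K" using xK by (metis image_eqI)
qed

lemma incl_lo:
  assumes n: "n \<ge> 1" and st: "star_shaped_n n K" and Ks: "K \<subseteq> space (leb_n n)"
  shows "cone_n n (space (leb_n n) - K) \<inter> (vnorm_n n -` {sqrt (real n)<..} \<inter> space (leb_n n))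
     \<subseteq> space (leb_n n) - vscale_n n (sqrt (real n)) ` K"
proof
  fix y assume y: "y \<in> cone_n n (space (leb_n n) - K) \<inter> (vnorm_n n -` {sqrt (real n)<..} \<inter> space (leb_n n))"
  let ?v = "vnorm_n n y" and ?s = "sqrt (real n)"
  have y1: "y \<in> space (leb_n n)" "vscale_n n (1/?v) y \<notin> K" "?v > ?s"
    using y by (auto simp: cone_n_def)
  have s: "?s > 0" using n by simp
  have v: "?v > 0" using s y1(3) by linarith
  show "y \<in> space (leb_n n) - vscale_n n ?s ` K"
  proof (rule ccontr)
    assume "y \<notin> space (leb_n n) - vscale_n n ?s ` K"
    then obtain x where x: "x \<in> K" "y = vscale_n n ?s x" using y1(1) by blast
    have "?s / ?v \<le> 1" using v y1(3) by (simp add: divide_le_eq_1)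
    moreover have "?s / ?v \<ge> 0" using v s by simp
    ultimately have t: "?s / ?v \<in> {0..1}" by simp
    have "vscale_n n (?s / ?v) x \<in> K" using st x(1) t unfolding star_shaped_n_def by blast
    moreover have "vscale_n n (1/?v) y = vscale_n n (?s / ?v) x"
      unfolding x(2) by (simp add: vscale_vscale)
    ultimately show False using y1(2) x(2) by simp
  qed
qed

lemma total_one:
  assumes n: "n \<ge> 1"
  shows "wD n UNIV * (real n * (2 * pi) powr (- real n / 2)) * MR (n-1) = 1"
proof -
  have "Jr n UNIV = ennreal (real n * (2 * pi) powr (- real n / 2)) * ennreal (MR (n-1))"
    using Jr_W[OF n, of UNIV] W_total[of "n-1"] by simp
  then have "ennreal (wD n UNIV) * (ennreal (real n * (2 * pi) powr (- real n / 2)) * ennreal (MR (n-1))) = 1"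
    using gauss_cone_univ[OF n] by simp
  then have "ennreal (wD n UNIV * (real n * (2 * pi) powr (- real n / 2)) * MR (n-1)) = 1"
    using wD_nonneg[of n UNIV] MR_pos[of "n-1"] by (simp add: ennreal_mult[symmetric] mult.assoc)
  then show ?thesis
    using wD_nonneg[of n UNIV] MR_pos[of "n-1"] by (subst (asm) ennreal_eq_1) auto
qed

lemma key:
  assumes n: "n \<ge> 1" and D: "D \<in> sets (leb_n n)" and R[measurable]: "R \<in> sets borel"
    and X: "X \<in> sets (leb_n n)" and sub: "cone_n n D \<inter> (vnorm_n n -` R \<inter> space (leb_n n)) \<subseteq> X"
    and I: "(\<integral>r. indicator R r * W (n-1) r \<partial>lborel) \<ge> MR (n-1) / 40"
  shows "measure (gauss_n n) X \<ge> 1/40 * (wD n D / wD n UNIV)"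
proof -
  let ?c = "real n * (2 * pi) powr (- real n / 2)"
  let ?I = "\<integral>r. indicator R r * W (n-1) r \<partial>lborel"
  have c: "?c > 0" using n by simp
  have one: "wD n UNIV * ?c * MR (n-1) = 1" by (rule total_one[OF n])
  have wS: "wD n UNIV > 0" using one wD_nonneg[of n UNIV] by (cases "wD n UNIV = 0") auto
  have Xg: "X \<in> sets (gauss_n n)" using X by (simp add: gauss_n_def)
  have Ipos: "?I \<ge> 0" using I MR_pos[of "n-1"] by linarith
  have "ennreal (wD n D * ?c * ?I) = ennreal (wD n D) * Jr n R"
    using Jr_W[OF n R] wD_nonneg[of n D] c Ipos by (simp add: ennreal_mult[symmetric] mult.assoc)
  also have "\<dots> = emeasure (gauss_n n) (cone_n n D \<inter> (vnorm_n n -` R \<inter> space (leb_n n)))"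
    by (rule gauss_cone[OF n D R, symmetric])
  also have "\<dots> \<le> emeasure (gauss_n n) X"
    using Xg sub by (intro emeasure_mono) auto
  finally have le: "ennreal (wD n D * ?c * ?I) \<le> emeasure (gauss_n n) X" .
  have "emeasure (gauss_n n) X \<le> emeasure (gauss_n n) (space (leb_n n))"
    using Xg by (intro emeasure_mono) (auto simp: gauss_n_def dest: sets.sets_into_space)
  then have fin: "emeasure (gauss_n n) X \<noteq> \<infinity>" using gauss_total[of n] by (auto simp: top_unique)
  then have "wD n D * ?c * ?I \<le> measure (gauss_n n) X"
    using le by (simp add: emeasure_eq_ennreal_measure ennreal_le_iff)
  moreover have "1/40 * (wD n D / wD n UNIV) = wD n D * ?c * (MR (n-1) / 40)"
  proof -
    have h: "1 / wD n UNIV = ?c * MR (n-1)" using one wS by (simp add: field_simps)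
    have "1/40 * (wD n D / wD n UNIV) = 1/40 * wD n D * (1 / wD n UNIV)" by simp
    also have "\<dots> = 1/40 * wD n D * (?c * MR (n-1))" by (simp only: h)
    also have "\<dots> = wD n D * ?c * (MR (n-1) / 40)" by simp
    finally show ?thesis .
  qed
  moreover have "wD n D * ?c * (MR (n-1) / 40) \<le> wD n D * ?c * ?I"
    using I wD_nonneg[of n D] c by (intro mult_left_mono) auto
  ultimately show ?thesis by linarith
qed

lemma sigma_eq:
  assumes n: "n \<ge> 1" and D: "D \<in> sets (leb_n n)"
  shows "sigma_n n D = wD n D / wD n UNIV"
proof -
  have "cone_n n UNIV \<in> sets (leb_n n)" unfolding cone_UNIV by (rule cone_sets) simp
  then show ?thesis unfolding sigma_n_def
    using sphcone_measure[OF n cone_sets[OF D]] sphcone_measure[OF n] by simp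
qed

theorem lemma2:
  shows "\<exists>\<alpha>::real. \<alpha> > 1/60 \<and>
    (\<forall>n::nat. \<forall>K. n \<ge> 1 \<longrightarrow> K \<in> sets (leb_n n) \<longrightarrow> star_shaped_n n K \<longrightarrow>
       measure (gauss_n n) (vscale_n n (sqrt (real n)) ` K) \<ge> \<alpha> * sigma_n n K \<and>
       measure (gauss_n n) (space (leb_n n) - vscale_n n (sqrt (real n)) ` K)
         \<ge> \<alpha> * sigma_n n (space (leb_n n) - K))"
proof (intro exI[of _ "1/40"] conjI allI impI)
  show "(1::real)/60 < 1/40" by simp
  fix n :: nat and K assume n: "n \<ge> 1" and K: "K \<in> sets (leb_n n)" and st: "star_shaped_n n K"
  have Ks: "K \<subseteq> space (leb_n n)" using K by (rule sets.sets_into_space)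
  have s0: "sqrt (real n) \<noteq> 0" using n by simp
  have img: "vscale_n n (sqrt (real n)) ` K \<in> sets (leb_n n)" by (rule image_scale_sets[OF s0 K])
  have nn: "sqrt (nn (n-1)) = sqrt (real n)" using nn_n[OF n] by simp
  show "1/40 * sigma_n n K \<le> measure (gauss_n n) (vscale_n n (sqrt (real n)) ` K)"
    unfolding sigma_eq[OF n K]
  proof (rule key[OF n K _ img incl_up[OF n st Ks]])
    show "MR (n-1) / 40 \<le> (\<integral>r. indicator {..sqrt (real n)} r * W (n-1) r \<partial>lborel)"
      using tail_lo[of "n-1"] unfolding nn .
  qed simp
  have CK: "space (leb_n n) - K \<in> sets (leb_n n)" using K by auto
  show "1/40 * sigma_n n (space (leb_n n) - K) \<le> measure (gauss_n n) (space (leb_n n) - vscale_n n (sqrt (real n)) ` K)"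
    unfolding sigma_eq[OF n CK]
  proof (rule key[OF n CK _ _ incl_lo[OF n st Ks]])
    show "MR (n-1) / 40 \<le> (\<integral>r. indicator {sqrt (real n)<..} r * W (n-1) r \<partial>lborel)"
      using tail_up[of "n-1"] unfolding nn .
  qed (use img in auto)
qed

end
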